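(* Let $d=1$, $\gamma>2$, and let $T_{\infty,\gamma}$ be distributed as $\int_{\mathbb{R}}W(t)^2 w_\gamma(t)\,\mathrm{d}t$, where $W$ is a centred Gaussian random element of $\mathrm{L}^2(\mathbb{R},\mathcal{B},w_\gamma(t)\mathrm{d}t)$ with covariance kernel $K(s,t)=\mathrm{e}^{(s^2+t^2)/2}\big(\mathrm{e}^{st}(ts+1)-ts-(1+st)\big)$. Then, with $\beta=\gamma-1$, $\delta=(\beta^2-1)^{-1/2}$ and $\eta=(4\beta^2-1)^{-1/2}$, \[ \mathrm{Var}[T_{\infty,\gamma}]=2\pi\Big(\beta^{-1}+\beta^{-3}+\delta+\delta^3+\tfrac14(\beta^2+2)\delta^5-4\eta-12\eta^3-16(2\beta^2+1)\eta^5\Big). \]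
   Context: $w_\gamma(t)=\exp(-\gamma t^2)$, $t\in\mathbb{R}$; $K(s,t)=\mathbb{E}[W(s)W(t)]$. *)

theory Defs
  imports "HOL-Probability.Probability"
begin

definition w_gamma :: "real \<Rightarrow> real \<Rightarrow> real" where
  "w_gamma \<gamma> t = exp (- \<gamma> * t\<^sup>2)"

definition K_lim :: "real \<Rightarrow> real \<Rightarrow> real" where
  "K_lim s t = exp ((s\<^sup>2 + t\<^sup>2) / 2) * (exp (s * t) * (t * s + 1) - t * s - (1 + s * t))"

definition centred_gaussian_rv :: "'a measure \<Rightarrow> ('a \<Rightarrow> real) \<Rightarrow> real \<Rightarrow> bool" where
  "centred_gaussian_rv M X v \<longleftrightarrow>
     X \<in> borel_measurable M \<and>
     (if v = 0 then (AE \<omega> in M. X \<omega> = 0)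
      else 0 < v \<and> distributed M lborel X (normal_density 0 (sqrt v)))"

definition centred_gaussian_process ::
  "'a measure \<Rightarrow> (real \<Rightarrow> real \<Rightarrow> real) \<Rightarrow> ('a \<Rightarrow> real \<Rightarrow> real) \<Rightarrow> bool" where
  "centred_gaussian_process M K W \<longleftrightarrow>
     (\<forall>(n::nat) (ts::nat \<Rightarrow> real) (c::nat \<Rightarrow> real).
        centred_gaussian_rv M (\<lambda>\<omega>. \<Sum>i<n. c i * W \<omega> (ts i))
          (\<Sum>i<n. \<Sum>j<n. c i * c j * K (ts i) (ts j)))"

end

theory Submission
  imports Defs
begin


lemma nd_expand:
  assumes "a > 0"
  shows "sqrt (pi/a) * exp (b\<^sup>2/(4*a)) * normal_density (b/(2*a)) (1/sqrt(2*a)) t = exp (-a*t\<^sup>2 + b*t)"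
proof -
  have s: "(1/sqrt(2*a))\<^sup>2 = 1/(2*a)" using assms by (simp add: power_divide)
  have "normal_density (b/(2*a)) (1/sqrt(2*a)) t = 1 / sqrt (pi/a) * exp (-a*(t - b/(2*a))\<^sup>2)"
    unfolding normal_density_def s using assms by (simp add: field_simps)
  moreover have "b\<^sup>2/(4*a) + -a*(t - b/(2*a))\<^sup>2 = -a*t\<^sup>2 + b*t"
    using assms by (simp add: field_simps power2_eq_square)
  ultimately show ?thesis using assms
    by (simp add: exp_add[symmetric])
qed

lemma gq:
  assumes a: "a > 0"
  shows "has_bochner_integral lborel (\<lambda>t. exp(-a*t\<^sup>2 + b*t) * (p0 + p1*t + p2*t\<^sup>2))
     (sqrt(pi/a) * exp(b\<^sup>2/(4*a)) * (p0 + p1*(b/(2*a)) + p2*((b/(2*a))\<^sup>2 + 1/(2*a))))"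
proof -
  define \<mu> where "\<mu> = b/(2*a)"
  define \<sigma> where "\<sigma> = 1/sqrt(2*a)"
  have sp: "\<sigma> > 0" using a by (simp add: \<sigma>_def)
  have s2: "\<sigma>\<^sup>2 = 1/(2*a)" using a by (simp add: \<sigma>_def power_divide)
  have N0: "has_bochner_integral lborel (\<lambda>x. normal_density \<mu> \<sigma> x) 1"
    using normal_moment_even[OF sp, where k=0 and \<mu>=\<mu>] by simp
  have N1: "has_bochner_integral lborel (\<lambda>x. normal_density \<mu> \<sigma> x * (x - \<mu>)) 0"
    using normal_moment_odd[OF sp, where k=0 and \<mu>=\<mu>] by simp
  have N2: "has_bochner_integral lborel (\<lambda>x. normal_density \<mu> \<sigma> x * (x - \<mu>)\<^sup>2) (1/(2*a))"
  proof -
    have v: "fact (2 * 1) / ((2 / \<sigma>\<^sup>2) ^ 1 * fact 1) = (1/(2*a)::real)" using s2 by simp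
    show ?thesis using normal_moment_even[OF sp, where k=1 and \<mu>=\<mu>] unfolding v by simp
  qed
  define C where "C = sqrt(pi/a) * exp(b\<^sup>2/(4*a))"
  have H: "has_bochner_integral lborel (\<lambda>x. C * ((p0 + p1*\<mu> + p2*\<mu>\<^sup>2) * normal_density \<mu> \<sigma> x
       + (p1 + 2*p2*\<mu>) * (normal_density \<mu> \<sigma> x * (x - \<mu>)) + p2 * (normal_density \<mu> \<sigma> x * (x - \<mu>)\<^sup>2)))
       (C * ((p0 + p1*\<mu> + p2*\<mu>\<^sup>2) * 1 + (p1 + 2*p2*\<mu>) * 0 + p2 * (1/(2*a))))"
    by (intro has_bochner_integral_mult_right has_bochner_integral_add has_bochner_integral_mult_right N0 N1 N2)
  have E: "C * normal_density \<mu> \<sigma> x = exp(-a*x\<^sup>2 + b*x)" for x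
    unfolding C_def \<mu>_def \<sigma>_def using nd_expand[OF a] by simp
  have F: "(\<lambda>x. C * ((p0 + p1*\<mu> + p2*\<mu>\<^sup>2) * normal_density \<mu> \<sigma> x
       + (p1 + 2*p2*\<mu>) * (normal_density \<mu> \<sigma> x * (x - \<mu>)) + p2 * (normal_density \<mu> \<sigma> x * (x - \<mu>)\<^sup>2)))
     = (\<lambda>t. exp(-a*t\<^sup>2 + b*t) * (p0 + p1*t + p2*t\<^sup>2))"
  proof
    fix x
    have "C * ((p0 + p1*\<mu> + p2*\<mu>\<^sup>2) * normal_density \<mu> \<sigma> x
       + (p1 + 2*p2*\<mu>) * (normal_density \<mu> \<sigma> x * (x - \<mu>)) + p2 * (normal_density \<mu> \<sigma> x * (x - \<mu>)\<^sup>2))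
      = (C * normal_density \<mu> \<sigma> x) * (p0 + p1*x + p2*x\<^sup>2)"
      by (simp add: algebra_simps power2_eq_square)
    also have "\<dots> = exp(-a*x\<^sup>2 + b*x) * (p0 + p1*x + p2*x\<^sup>2)" by (simp only: E)
    finally show "C * ((p0 + p1*\<mu> + p2*\<mu>\<^sup>2) * normal_density \<mu> \<sigma> x
       + (p1 + 2*p2*\<mu>) * (normal_density \<mu> \<sigma> x * (x - \<mu>)) + p2 * (normal_density \<mu> \<sigma> x * (x - \<mu>)\<^sup>2)) = exp(-a*x\<^sup>2 + b*x) * (p0 + p1*x + p2*x\<^sup>2)" .
  qed
  have val: "C * ((p0 + p1*\<mu> + p2*\<mu>\<^sup>2) * 1 + (p1 + 2*p2*\<mu>) * 0 + p2 * (1/(2*a)))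
     = sqrt(pi/a) * exp(b\<^sup>2/(4*a)) * (p0 + p1*(b/(2*a)) + p2*((b/(2*a))\<^sup>2 + 1/(2*a)))"
    unfolding C_def \<mu>_def by (simp add: algebra_simps power2_eq_square)
  show ?thesis using H unfolding F val .
qed

lemma gq4:
  assumes a: "a > 0"
  shows "has_bochner_integral lborel (\<lambda>t. exp(-a*t\<^sup>2) * (p0 + p2*t\<^sup>2 + p4*t^4))
     (sqrt(pi/a) * (p0 + p2/(2*a) + 3*p4/(4*a\<^sup>2)))"
proof -
  define \<sigma> where "\<sigma> = 1/sqrt(2*a)"
  have sp: "\<sigma> > 0" using a by (simp add: \<sigma>_def)
  have s2: "\<sigma>\<^sup>2 = 1/(2*a)" using a by (simp add: \<sigma>_def power_divide)
  have N0: "has_bochner_integral lborel (\<lambda>x. normal_density 0 \<sigma> x) 1"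
    using normal_moment_even[OF sp, where k=0 and \<mu>=0] by simp
  have N2: "has_bochner_integral lborel (\<lambda>x. normal_density 0 \<sigma> x * x\<^sup>2) (1/(2*a))"
  proof -
    have v: "fact (2 * 1) / ((2 / \<sigma>\<^sup>2) ^ 1 * fact 1) = (1/(2*a)::real)" using s2 by simp
    show ?thesis using normal_moment_even[OF sp, where k=1 and \<mu>=0] unfolding v by simp
  qed
  have N4: "has_bochner_integral lborel (\<lambda>x. normal_density 0 \<sigma> x * x^4) (3/(4*a\<^sup>2))"
  proof -
    have "fact (2 * 2) / ((2 / \<sigma>\<^sup>2) ^ 2 * fact 2) = (3/(4*a\<^sup>2)::real)"
      unfolding s2 using a by (simp add: fact_numeral field_simps power2_eq_square)
    then show ?thesis using normal_moment_even[OF sp, where k=2 and \<mu>=0] by (simp del: fact_numeral)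
  qed
  define C where "C = sqrt(pi/a)"
  have H: "has_bochner_integral lborel (\<lambda>x. C * (p0 * normal_density 0 \<sigma> x
       + p2 * (normal_density 0 \<sigma> x * x\<^sup>2) + p4 * (normal_density 0 \<sigma> x * x^4)))
       (C * (p0 * 1 + p2 * (1/(2*a)) + p4 * (3/(4*a\<^sup>2))))"
    by (intro has_bochner_integral_mult_right has_bochner_integral_add N0 N2 N4)
  have E: "C * normal_density 0 \<sigma> x = exp(-a*x\<^sup>2)" for x
    unfolding C_def \<sigma>_def using nd_expand[OF a, of 0 x] by simp
  have F: "(\<lambda>x. C * (p0 * normal_density 0 \<sigma> x
       + p2 * (normal_density 0 \<sigma> x * x\<^sup>2) + p4 * (normal_density 0 \<sigma> x * x^4)))
     = (\<lambda>t. exp(-a*t\<^sup>2) * (p0 + p2*t\<^sup>2 + p4*t^4))"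
  proof
    fix x
    have "C * (p0 * normal_density 0 \<sigma> x
       + p2 * (normal_density 0 \<sigma> x * x\<^sup>2) + p4 * (normal_density 0 \<sigma> x * x^4))
      = (C * normal_density 0 \<sigma> x) * (p0 + p2*x\<^sup>2 + p4*x^4)"
      by (simp add: algebra_simps)
    also have "\<dots> = exp(-a*x\<^sup>2) * (p0 + p2*x\<^sup>2 + p4*x^4)" by (simp only: E)
    finally show "C * (p0 * normal_density 0 \<sigma> x
       + p2 * (normal_density 0 \<sigma> x * x\<^sup>2) + p4 * (normal_density 0 \<sigma> x * x^4)) = exp(-a*x\<^sup>2) * (p0 + p2*x\<^sup>2 + p4*x^4)" .
  qed
  have val: "C * (p0 * 1 + p2 * (1/(2*a)) + p4 * (3/(4*a\<^sup>2))) = sqrt(pi/a) * (p0 + p2/(2*a) + 3*p4/(4*a\<^sup>2))"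
    unfolding C_def by (simp add: algebra_simps)
  show ?thesis using H unfolding F val .
qed



definition kwf :: "real \<Rightarrow> real \<Rightarrow> real" where
  "kwf \<gamma> t = K_lim t t * w_gamma \<gamma> t"

lemma kw_eq: "kwf \<gamma> t = exp(-(\<gamma>-2)*t\<^sup>2) * (1 + 1*t\<^sup>2 + 0*t^4) + exp(-(\<gamma>-1)*t\<^sup>2) * (-1 + (-2)*t\<^sup>2 + 0*t^4)"
proof -
  have e1: "exp(-(\<gamma>-2)*t\<^sup>2) = exp(t\<^sup>2) * exp(t\<^sup>2) * exp(-\<gamma>*t\<^sup>2)"
    by (simp add: exp_add[symmetric] algebra_simps)
  have e2: "exp(-(\<gamma>-1)*t\<^sup>2) = exp(t\<^sup>2) * exp(-\<gamma>*t\<^sup>2)"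
    by (simp add: exp_add[symmetric] algebra_simps)
  have e3: "exp((t\<^sup>2 + t\<^sup>2)/2) = exp(t\<^sup>2)" by simp
  have e4: "exp(t*t) = exp(t\<^sup>2)" by (simp add: power2_eq_square)
  show ?thesis unfolding kwf_def K_lim_def w_gamma_def e1 e2 e3 e4
    by (simp add: algebra_simps power2_eq_square)
qed

definition mval :: "real \<Rightarrow> real" where
  "mval \<gamma> = sqrt(pi/(\<gamma>-2)) * (1 + 1/(2*(\<gamma>-2)) + 3*0/(4*(\<gamma>-2)\<^sup>2))
          + sqrt(pi/(\<gamma>-1)) * (-1 + (-2)/(2*(\<gamma>-1)) + 3*0/(4*(\<gamma>-1)\<^sup>2))"

lemma kw_int: assumes "\<gamma> > 2" shows "has_bochner_integral lborel (kwf \<gamma>) (mval \<gamma>)"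
proof -
  have "has_bochner_integral lborel (\<lambda>t. exp(-(\<gamma>-2)*t\<^sup>2) * (1 + 1*t\<^sup>2 + 0*t^4) + exp(-(\<gamma>-1)*t\<^sup>2) * (-1 + (-2)*t\<^sup>2 + 0*t^4)) (mval \<gamma>)"
    unfolding mval_def
    by (intro has_bochner_integral_add gq4) (use assms in auto)
  then show ?thesis by (simp only: kw_eq[abs_def])
qed

lemma K_sym: "K_lim s t = K_lim t s"
  unfolding K_lim_def by (simp add: algebra_simps)

lemma K2_eq:
  "(K_lim u t)\<^sup>2 * w_gamma \<gamma> u * w_gamma \<gamma> t = exp(-(\<gamma>-1)*u\<^sup>2) *
     (exp(-(\<gamma>-1)*t\<^sup>2 + (2*u)*t) * (1 + (2*u)*t + u\<^sup>2*t\<^sup>2)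
    + exp(-(\<gamma>-1)*t\<^sup>2 + u*t) * (-2 + (-6*u)*t + (-4*u\<^sup>2)*t\<^sup>2)
    + exp(-(\<gamma>-1)*t\<^sup>2 + 0*t) * (1 + (4*u)*t + (4*u\<^sup>2)*t\<^sup>2))"
proof -
  have e1: "exp(-(\<gamma>-1)*u\<^sup>2) = exp(u\<^sup>2) * exp(-\<gamma>*u\<^sup>2)"
    by (simp add: exp_add[symmetric] algebra_simps)
  have e2: "exp(-(\<gamma>-1)*t\<^sup>2 + (2*u)*t) = exp(t\<^sup>2) * exp(-\<gamma>*t\<^sup>2) * exp(u*t) * exp(u*t)"
    by (simp add: exp_add[symmetric] algebra_simps)
  have e3: "exp(-(\<gamma>-1)*t\<^sup>2 + u*t) = exp(t\<^sup>2) * exp(-\<gamma>*t\<^sup>2) * exp(u*t)"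
    by (simp add: exp_add[symmetric] algebra_simps)
  have e4: "exp(-(\<gamma>-1)*t\<^sup>2 + 0*t) = exp(t\<^sup>2) * exp(-\<gamma>*t\<^sup>2)"
    by (simp add: exp_add[symmetric] algebra_simps)
  have e5: "(exp((u\<^sup>2 + t\<^sup>2)/2))\<^sup>2 = exp(u\<^sup>2) * exp(t\<^sup>2)"
    by (simp add: exp_add[symmetric] power2_eq_square algebra_simps)
  have kk: "(K_lim u t)\<^sup>2 = exp(u\<^sup>2) * exp(t\<^sup>2) * (exp (u * t) * (t * u + 1) - t * u - (1 + u * t))\<^sup>2"
    unfolding K_lim_def power_mult_distrib e5 ..
  show ?thesis unfolding kk w_gamma_def e1 e2 e3 e4
    by (simp add: algebra_simps power2_eq_square)
qed


definition gqv :: "real \<Rightarrow> real \<Rightarrow> real \<Rightarrow> real \<Rightarrow> real \<Rightarrow> real" where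
  "gqv a b p0 p1 p2 = sqrt(pi/a) * exp(b\<^sup>2/(4*a)) * (p0 + p1*(b/(2*a)) + p2*((b/(2*a))\<^sup>2 + 1/(2*a)))"

definition Gf :: "real \<Rightarrow> real \<Rightarrow> real" where
  "Gf \<gamma> u = kwf \<gamma> u * mval \<gamma> + 2 * (exp(-(\<gamma>-1)*u\<^sup>2) *
     (gqv (\<gamma>-1) (2*u) 1 (2*u) (u\<^sup>2) + gqv (\<gamma>-1) u (-2) (-6*u) (-4*u\<^sup>2) + gqv (\<gamma>-1) 0 1 (4*u) (4*u\<^sup>2)))"

lemma inner_int:
  assumes g: "\<gamma> > 2"
  shows "has_bochner_integral lborel
     (\<lambda>t. (K_lim u u * K_lim t t + 2 * (K_lim u t)\<^sup>2) * w_gamma \<gamma> u * w_gamma \<gamma> t) (Gf \<gamma> u)"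
proof -
  have a: "\<gamma> - 1 > 0" using g by simp
  have H: "has_bochner_integral lborel (\<lambda>t. kwf \<gamma> u * kwf \<gamma> t + 2 * (exp(-(\<gamma>-1)*u\<^sup>2) *
     (exp(-(\<gamma>-1)*t\<^sup>2 + (2*u)*t) * (1 + (2*u)*t + u\<^sup>2*t\<^sup>2)
    + exp(-(\<gamma>-1)*t\<^sup>2 + u*t) * (-2 + (-6*u)*t + (-4*u\<^sup>2)*t\<^sup>2)
    + exp(-(\<gamma>-1)*t\<^sup>2 + 0*t) * (1 + (4*u)*t + (4*u\<^sup>2)*t\<^sup>2)))) (Gf \<gamma> u)"
    unfolding Gf_def gqv_def
    by (intro has_bochner_integral_add has_bochner_integral_mult_right kw_int g gq a)
  have F: "(K_lim u u * K_lim t t + 2 * (K_lim u t)\<^sup>2) * w_gamma \<gamma> u * w_gamma \<gamma> t =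
     kwf \<gamma> u * kwf \<gamma> t + 2 * ((K_lim u t)\<^sup>2 * w_gamma \<gamma> u * w_gamma \<gamma> t)" for t
    unfolding kwf_def by (simp add: algebra_simps)
  show ?thesis unfolding F K2_eq using H by simp
qed

lemma G_eq:
  assumes g: "\<gamma> > 2"
  shows "Gf \<gamma> u = mval \<gamma> * kwf \<gamma> u + 2 * sqrt(pi/(\<gamma>-1)) *
     (exp(-((\<gamma>-1) - 1/(\<gamma>-1))*u\<^sup>2) * (1 + (5/(2*(\<gamma>-1)))*u\<^sup>2 + (1/(\<gamma>-1)\<^sup>2)*u^4)
    + exp(-((\<gamma>-1) - 1/(4*(\<gamma>-1)))*u\<^sup>2) * (-2 + (-5/(\<gamma>-1))*u\<^sup>2 + (-1/(\<gamma>-1)\<^sup>2)*u^4)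
    + exp(-(\<gamma>-1)*u\<^sup>2) * (1 + (2/(\<gamma>-1))*u\<^sup>2 + 0*u^4))"
proof -
  define b where "b = \<gamma> - 1"
  have bp: "b > 1" using g by (simp add: b_def)
  have e2: "exp(-b*u\<^sup>2) * exp((2*u)\<^sup>2/(4*b)) = exp(-(b - 1/b)*u\<^sup>2)"
    using bp by (simp add: exp_add[symmetric] field_simps power2_eq_square)
  have e1: "exp(-b*u\<^sup>2) * exp(u\<^sup>2/(4*b)) = exp(-(b - 1/(4*b))*u\<^sup>2)"
    using bp by (simp add: exp_add[symmetric] field_simps power2_eq_square)
  have p2: "1 + (2*u)*((2*u)/(2*b)) + u\<^sup>2*(((2*u)/(2*b))\<^sup>2 + 1/(2*b)) = 1 + (5/(2*b))*u\<^sup>2 + (1/b\<^sup>2)*u^4"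
    using bp by (simp add: field_simps power2_eq_square power4_eq_xxxx)
  have p1: "-2 + (-6*u)*(u/(2*b)) + (-4*u\<^sup>2)*((u/(2*b))\<^sup>2 + 1/(2*b)) = -2 + (-5/b)*u\<^sup>2 + (-1/b\<^sup>2)*u^4"
    using bp by (simp add: field_simps power2_eq_square power4_eq_xxxx)
  have p0: "1 + (4*u)*(0/(2*b)) + (4*u\<^sup>2)*((0/(2*b))\<^sup>2 + 1/(2*b)) = 1 + (2/b)*u\<^sup>2 + 0*u^4"
    using bp by (simp add: field_simps power2_eq_square)
  have "Gf \<gamma> u = kwf \<gamma> u * mval \<gamma> + 2 * sqrt(pi/b) *
     ((exp(-b*u\<^sup>2) * exp((2*u)\<^sup>2/(4*b))) * (1 + (2*u)*((2*u)/(2*b)) + u\<^sup>2*(((2*u)/(2*b))\<^sup>2 + 1/(2*b)))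
    + (exp(-b*u\<^sup>2) * exp(u\<^sup>2/(4*b))) * (-2 + (-6*u)*(u/(2*b)) + (-4*u\<^sup>2)*((u/(2*b))\<^sup>2 + 1/(2*b)))
    + exp(-b*u\<^sup>2) * (1 + (4*u)*(0/(2*b)) + (4*u\<^sup>2)*((0/(2*b))\<^sup>2 + 1/(2*b))))"
    unfolding Gf_def gqv_def b_def[symmetric] by (simp add: algebra_simps)
  also have "\<dots> = mval \<gamma> * kwf \<gamma> u + 2 * sqrt(pi/b) *
     (exp(-(b - 1/b)*u\<^sup>2) * (1 + (5/(2*b))*u\<^sup>2 + (1/b\<^sup>2)*u^4)
    + exp(-(b - 1/(4*b))*u\<^sup>2) * (-2 + (-5/b)*u\<^sup>2 + (-1/b\<^sup>2)*u^4)
    + exp(-b*u\<^sup>2) * (1 + (2/b)*u\<^sup>2 + 0*u^4))"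
    unfolding e2 e1 p2 p1 p0 by simp
  finally show ?thesis unfolding b_def .
qed

definition Ival :: "real \<Rightarrow> real" where
  "Ival \<gamma> = sqrt(pi/(\<gamma>-1)) *
     (sqrt(pi/((\<gamma>-1) - 1/(\<gamma>-1))) * (1 + (5/(2*(\<gamma>-1)))/(2*((\<gamma>-1) - 1/(\<gamma>-1))) + 3*(1/(\<gamma>-1)\<^sup>2)/(4*((\<gamma>-1) - 1/(\<gamma>-1))\<^sup>2))
    + sqrt(pi/((\<gamma>-1) - 1/(4*(\<gamma>-1)))) * (-2 + (-5/(\<gamma>-1))/(2*((\<gamma>-1) - 1/(4*(\<gamma>-1)))) + 3*(-1/(\<gamma>-1)\<^sup>2)/(4*((\<gamma>-1) - 1/(4*(\<gamma>-1)))\<^sup>2))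
    + sqrt(pi/(\<gamma>-1)) * (1 + (2/(\<gamma>-1))/(2*(\<gamma>-1)) + 3*0/(4*(\<gamma>-1)\<^sup>2)))"

lemma outer_int:
  assumes g: "\<gamma> > 2"
  shows "has_bochner_integral lborel (Gf \<gamma>) (mval \<gamma> * mval \<gamma> + 2 * Ival \<gamma>)"
proof -
  have a1: "(\<gamma>-1) - 1/(\<gamma>-1) > 0" using g by (simp add: field_simps)
  have a2: "(\<gamma>-1) - 1/(4*(\<gamma>-1)) > 0"
  proof -
    have "0 < (2*\<gamma>-1)*(2*\<gamma>-3)" using g by (intro mult_pos_pos) auto
    then show ?thesis using g by (simp add: field_simps algebra_simps)
  qed
  have a0: "\<gamma> - 1 > 0" using g by simp
  have "has_bochner_integral lborel (\<lambda>u. mval \<gamma> * kwf \<gamma> u + 2 * sqrt(pi/(\<gamma>-1)) *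
     (exp(-((\<gamma>-1) - 1/(\<gamma>-1))*u\<^sup>2) * (1 + (5/(2*(\<gamma>-1)))*u\<^sup>2 + (1/(\<gamma>-1)\<^sup>2)*u^4)
    + exp(-((\<gamma>-1) - 1/(4*(\<gamma>-1)))*u\<^sup>2) * (-2 + (-5/(\<gamma>-1))*u\<^sup>2 + (-1/(\<gamma>-1)\<^sup>2)*u^4)
    + exp(-(\<gamma>-1)*u\<^sup>2) * (1 + (2/(\<gamma>-1))*u\<^sup>2 + 0*u^4))) (mval \<gamma> * mval \<gamma> + 2 * Ival \<gamma>)"
    unfolding Ival_def mult.assoc[symmetric]
    by (intro has_bochner_integral_add has_bochner_integral_mult_right kw_int g gq4 a0 a1 a2)
  then show ?thesis by (simp only: G_eq[OF g, abs_def])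
qed


lemma Ival_formula:
  assumes g: "\<gamma> > 2"
  shows "2 * Ival \<gamma> = (let \<beta> = \<gamma> - 1; \<delta> = 1 / sqrt (\<beta>\<^sup>2 - 1); \<eta> = 1 / sqrt (4 * \<beta>\<^sup>2 - 1)
     in 2 * pi * (1 / \<beta> + 1 / \<beta> ^ 3 + \<delta> + \<delta> ^ 3 + (1/4) * (\<beta>\<^sup>2 + 2) * \<delta> ^ 5
                        - 4 * \<eta> - 12 * \<eta> ^ 3 - 16 * (2 * \<beta>\<^sup>2 + 1) * \<eta> ^ 5))"
proof -
  define b where "b = \<gamma> - 1"
  define \<delta> where "\<delta> = 1 / sqrt (b\<^sup>2 - 1)"
  define \<eta> where "\<eta> = 1 / sqrt (4 * b\<^sup>2 - 1)"
  have b1: "b > 1" using g by (simp add: b_def)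
  have bb: "b\<^sup>2 > 1" using b1 by (simp add: one_less_power)
  have bb4: "4*b\<^sup>2 > 1" using bb by simp
  have dpos: "\<delta> > 0" using bb by (simp add: \<delta>_def)
  have epos: "\<eta> > 0" using bb4 by (simp add: \<eta>_def)
  have dd: "\<delta>\<^sup>2 = 1/(b\<^sup>2-1)" using bb by (simp add: \<delta>_def power_divide)
  have ee: "\<eta>\<^sup>2 = 1/(4*b\<^sup>2-1)" using bb4 by (simp add: \<eta>_def power_divide)
  have a2: "b - 1/b > 0" using b1 by (simp add: field_simps) (smt (verit) b1 mult_less_cancel_right1)
  have a1: "b - 1/(4*b) > 0" using b1 bb4 by (simp add: field_simps power2_eq_square)
  have k2: "sqrt(pi/b) * sqrt(pi/(b - 1/b)) = pi * \<delta>"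
  proof (rule power2_eq_imp_eq)
    show "(sqrt(pi/b) * sqrt(pi/(b - 1/b)))\<^sup>2 = (pi * \<delta>)\<^sup>2"
      using b1 a2 bb unfolding power_mult_distrib dd by (simp add: field_simps power2_eq_square)
  qed (use dpos b1 a2 in \<open>auto intro!: mult_nonneg_nonneg\<close>)
  have k1: "sqrt(pi/b) * sqrt(pi/(b - 1/(4*b))) = 2 * pi * \<eta>"
  proof (rule power2_eq_imp_eq)
    show "(sqrt(pi/b) * sqrt(pi/(b - 1/(4*b))))\<^sup>2 = (2 * pi * \<eta>)\<^sup>2"
      using b1 a1 bb4 unfolding power_mult_distrib ee by (simp add: field_simps power2_eq_square)
  qed (use epos b1 a1 in \<open>auto intro!: mult_nonneg_nonneg\<close>)
  have k0: "sqrt(pi/b) * sqrt(pi/b) = pi / b" using b1 by simp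
  have P2: "1 + (5/(2*b))/(2*(b - 1/b)) + 3*(1/b\<^sup>2)/(4*(b - 1/b)\<^sup>2) = 1 + \<delta>\<^sup>2 + (1/4)*(b\<^sup>2+2)*(\<delta>\<^sup>2)\<^sup>2"
  proof -
    define c where "c = b\<^sup>2 - 1"
    have cp: "c > 0" using bb by (simp add: c_def)
    have q: "b - 1/b = c/b" using b1 by (simp add: c_def field_simps power2_eq_square)
    have r: "b\<^sup>2 = c + 1" by (simp add: c_def)
    have t1: "(5/(2*b))/(2*(c/b)) = 5/(4*c)" using b1 cp by (simp add: field_simps)
    have t2: "3*(1/b\<^sup>2)/(4*(c/b)\<^sup>2) = 3/(4*c\<^sup>2)" using b1 cp by (simp add: field_simps power2_eq_square)
    show ?thesis unfolding dd q c_def[symmetric] t1 t2 using cp r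
      by (simp add: field_simps power2_eq_square)
  qed
  have P1: "-2 + (-5/b)/(2*(b - 1/(4*b))) + 3*(-1/b\<^sup>2)/(4*(b - 1/(4*b))\<^sup>2) = -2 - 6*\<eta>\<^sup>2 - 8*(2*b\<^sup>2+1)*(\<eta>\<^sup>2)\<^sup>2"
  proof -
    define c where "c = 4*b\<^sup>2 - 1"
    have cp: "c > 0" using bb4 by (simp add: c_def)
    have q: "b - 1/(4*b) = c/(4*b)" using b1 by (simp add: c_def field_simps power2_eq_square)
    have r: "b\<^sup>2 = (c + 1)/4" by (simp add: c_def)
    have rr: "b*(b*(c*16)) = c*4 + c*(c*4)"
    proof -
      have "b*(b*(c*16)) = (b*(b*4))*(c*4)" by (simp add: algebra_simps)
      also have "b*(b*4) = 1 + c" using r by (simp add: power2_eq_square)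
      finally show ?thesis by (simp add: algebra_simps)
    qed
    have t1: "(-5/b)/(2*(c/(4*b))) = -10/c" using b1 cp by (simp add: field_simps)
    have t2: "3*(-1/b\<^sup>2)/(4*(c/(4*b))\<^sup>2) = -12/c\<^sup>2" using b1 cp by (simp add: field_simps power2_eq_square)
    show ?thesis unfolding ee q c_def[symmetric] t1 t2 using cp r
      by (simp add: field_simps power2_eq_square) (use rr in simp)
  qed
  have P0: "1 + (2/b)/(2*b) + 3*0/(4*b\<^sup>2) = 1 + 1/b\<^sup>2"
    using b1 by (simp add: field_simps power2_eq_square)
  have "Ival \<gamma> = (sqrt(pi/b) * sqrt(pi/(b - 1/b))) * (1 + (5/(2*b))/(2*(b - 1/b)) + 3*(1/b\<^sup>2)/(4*(b - 1/b)\<^sup>2))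
     + (sqrt(pi/b) * sqrt(pi/(b - 1/(4*b)))) * (-2 + (-5/b)/(2*(b - 1/(4*b))) + 3*(-1/b\<^sup>2)/(4*(b - 1/(4*b))\<^sup>2))
     + (sqrt(pi/b) * sqrt(pi/b)) * (1 + (2/b)/(2*b) + 3*0/(4*b\<^sup>2))"
    unfolding Ival_def b_def[symmetric] by (simp only: distrib_left mult.assoc)
  also have "\<dots> = pi * \<delta> * (1 + \<delta>\<^sup>2 + (1/4)*(b\<^sup>2+2)*(\<delta>\<^sup>2)\<^sup>2) + 2 * pi * \<eta> * (-2 - 6*\<eta>\<^sup>2 - 8*(2*b\<^sup>2+1)*(\<eta>\<^sup>2)\<^sup>2)
      + pi / b * (1 + 1/b\<^sup>2)"
    unfolding k2 k1 k0 P2 P1 P0 ..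
  finally have I: "2 * Ival \<gamma> = 2 * (pi * \<delta> * (1 + \<delta>\<^sup>2 + (1/4)*(b\<^sup>2+2)*(\<delta>\<^sup>2)\<^sup>2) + 2 * pi * \<eta> * (-2 - 6*\<eta>\<^sup>2 - 8*(2*b\<^sup>2+1)*(\<eta>\<^sup>2)\<^sup>2)
      + pi / b * (1 + 1/b\<^sup>2))" by simp
  show ?thesis unfolding Let_def b_def[symmetric] \<delta>_def[symmetric] \<eta>_def[symmetric] I
    using b1 by (simp add: field_simps power2_eq_square eval_nat_numeral)
qed

lemma cg_moments:
  assumes P: "prob_space M" and G: "centred_gaussian_rv M X v"
  shows "0 \<le> v \<and> integrable M (\<lambda>\<omega>. X \<omega> ^ 4) \<and> (\<integral>\<omega>. X \<omega> ^ 4 \<partial>M) = 3 * v\<^sup>2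
       \<and> integrable M (\<lambda>\<omega>. (X \<omega>)\<^sup>2) \<and> (\<integral>\<omega>. (X \<omega>)\<^sup>2 \<partial>M) = v"
proof (cases "v = 0")
  case True
  then have ae: "AE \<omega> in M. X \<omega> = 0" and Xm: "X \<in> borel_measurable M"
    using G by (auto simp: centred_gaussian_rv_def)
  have ae4: "AE \<omega> in M. X \<omega> ^ 4 = 0" using ae by eventually_elim simp
  have ae2: "AE \<omega> in M. (X \<omega>)\<^sup>2 = 0" using ae by eventually_elim simp
  have i4: "integrable M (\<lambda>\<omega>. X \<omega> ^ 4)"
    by (rule integrable_cong_AE_imp[OF integrable_zero _ ae4[THEN AE_mp, OF AE_I2]]) (use Xm in auto)
  have i2: "integrable M (\<lambda>\<omega>. (X \<omega>)\<^sup>2)"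
    by (rule integrable_cong_AE_imp[OF integrable_zero _ ae2[THEN AE_mp, OF AE_I2]]) (use Xm in auto)
  have e4: "(\<integral>\<omega>. X \<omega> ^ 4 \<partial>M) = 0"
    using integral_cong_AE[of "\<lambda>\<omega>. X \<omega> ^ 4" M "\<lambda>_. 0"] ae4 Xm by simp
  have e2: "(\<integral>\<omega>. (X \<omega>)\<^sup>2 \<partial>M) = 0"
    using integral_cong_AE[of "\<lambda>\<omega>. (X \<omega>)\<^sup>2" M "\<lambda>_. 0"] ae2 Xm by simp
  show ?thesis using True i4 i2 e4 e2 by simp
next
  case False
  then have vp: "0 < v" and D: "distributed M lborel X (normal_density 0 (sqrt v))"
    using G by (auto simp: centred_gaussian_rv_def)
  have sp: "0 < sqrt v" using vp by simp
  have m4: "has_bochner_integral lborel (\<lambda>x. normal_density 0 (sqrt v) x * x ^ 4) (3 * v\<^sup>2)"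
  proof -
    have v: "fact (2 * 2) / ((2 / (sqrt v)\<^sup>2) ^ 2 * fact 2) = (3 * v\<^sup>2::real)"
      using vp by (simp add: fact_numeral field_simps power2_eq_square)
    show ?thesis using normal_moment_even[OF sp, where k=2 and \<mu>=0] unfolding v by simp
  qed
  have m2: "has_bochner_integral lborel (\<lambda>x. normal_density 0 (sqrt v) x * x\<^sup>2) v"
  proof -
    have v: "fact (2 * 1) / ((2 / (sqrt v)\<^sup>2) ^ 1 * fact 1) = (v::real)"
      using vp by simp
    show ?thesis using normal_moment_even[OF sp, where k=1 and \<mu>=0] unfolding v by simp
  qed
  have i4: "integrable M (\<lambda>\<omega>. X \<omega> ^ 4)"
    using distributed_integrable[OF D, of "\<lambda>x. x ^ 4"] integrable.intros[OF m4] by simp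
  have i2: "integrable M (\<lambda>\<omega>. (X \<omega>)\<^sup>2)"
    using distributed_integrable[OF D, of "\<lambda>x. x\<^sup>2"] integrable.intros[OF m2] by simp
  have e4: "(\<integral>\<omega>. X \<omega> ^ 4 \<partial>M) = 3 * v\<^sup>2"
    using distributed_integral[OF D, of "\<lambda>x. x ^ 4"] m4 has_bochner_integral_integral_eq by fastforce
  have e2: "(\<integral>\<omega>. (X \<omega>)\<^sup>2 \<partial>M) = v"
    using distributed_integral[OF D, of "\<lambda>x. x\<^sup>2"] m2 has_bochner_integral_integral_eq by fastforce
  show ?thesis using vp i4 i2 e4 e2 by simp
qed

lemma cg_cross:
  assumes P: "prob_space M"
    and GX: "centred_gaussian_rv M X a" and GY: "centred_gaussian_rv M Y b"
    and Gp: "centred_gaussian_rv M (\<lambda>\<omega>. X \<omega> + Y \<omega>) (a + b + 2*c)"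
    and Gm: "centred_gaussian_rv M (\<lambda>\<omega>. X \<omega> - Y \<omega>) (a + b - 2*c)"
  shows "integrable M (\<lambda>\<omega>. (X \<omega>)\<^sup>2 * (Y \<omega>)\<^sup>2) \<and> (\<integral>\<omega>. (X \<omega>)\<^sup>2 * (Y \<omega>)\<^sup>2 \<partial>M) = a * b + 2 * c\<^sup>2"
proof -
  note X = cg_moments[OF P GX] and Y = cg_moments[OF P GY]
  note Sp = cg_moments[OF P Gp] and Sm = cg_moments[OF P Gm]
  have eq: "(\<lambda>\<omega>. (X \<omega>)\<^sup>2 * (Y \<omega>)\<^sup>2) = (\<lambda>\<omega>. ((X \<omega> + Y \<omega>)^4 + (X \<omega> - Y \<omega>)^4 - 2 * X \<omega> ^ 4 - 2 * Y \<omega> ^ 4) / 12)"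
    by (rule ext) (simp add: algebra_simps power2_eq_square power4_eq_xxxx)
  have int: "integrable M (\<lambda>\<omega>. ((X \<omega> + Y \<omega>)^4 + (X \<omega> - Y \<omega>)^4 - 2 * X \<omega> ^ 4 - 2 * Y \<omega> ^ 4) / 12)"
    using X Y Sp Sm by (intro integrable_divide integrable_diff integrable_add integrable_mult_right) auto
  have "(\<integral>\<omega>. ((X \<omega> + Y \<omega>)^4 + (X \<omega> - Y \<omega>)^4 - 2 * X \<omega> ^ 4 - 2 * Y \<omega> ^ 4) / 12 \<partial>M)
     = (3*(a+b+2*c)\<^sup>2 + 3*(a+b-2*c)\<^sup>2 - 2*(3*a\<^sup>2) - 2*(3*b\<^sup>2)) / 12"
    using X Y Sp Sm by (simp add: integral_diff integral_add integrable_diff integrable_add)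
  also have "\<dots> = a * b + 2 * c\<^sup>2" by (simp add: algebra_simps power2_eq_square)
  finally show ?thesis using int unfolding eq by simp
qed


lemma hbi_nn:
  assumes "has_bochner_integral N f v" "\<And>x. 0 \<le> f x"
  shows "(\<integral>\<^sup>+x. ennreal (f x) \<partial>N) = ennreal v \<and> 0 \<le> v"
proof -
  have i: "integrable N f" using assms(1) by (rule integrable.intros)
  have e: "integral\<^sup>L N f = v" using assms(1) by (rule has_bochner_integral_integral_eq)
  show ?thesis using nn_integral_eq_integral[OF i] integral_nonneg assms(2) e by auto
qed

lemma proc_facts:
  assumes P: "prob_space M" and G: "centred_gaussian_process M K_lim W"
  shows "centred_gaussian_rv M (\<lambda>\<omega>. W \<omega> s) (K_lim s s)"
    and "integrable M (\<lambda>\<omega>. (W \<omega> s)\<^sup>2 * (W \<omega> t)\<^sup>2) \<and>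
         (\<integral>\<omega>. (W \<omega> s)\<^sup>2 * (W \<omega> t)\<^sup>2 \<partial>M) = K_lim s s * K_lim t t + 2 * (K_lim s t)\<^sup>2"
proof -
  have H: "\<And>(n::nat) (ts::nat\<Rightarrow>real) (c::nat\<Rightarrow>real). centred_gaussian_rv M (\<lambda>\<omega>. \<Sum>i<n. c i * W \<omega> (ts i)) (\<Sum>i<n. \<Sum>j<n. c i * c j * K_lim (ts i) (ts j))"
    using G unfolding centred_gaussian_process_def by blast
  have one: "centred_gaussian_rv M (\<lambda>\<omega>. W \<omega> x) (K_lim x x)" for x
    using H[where n=1 and ts="\<lambda>_. x" and c="\<lambda>_. 1"] by simp
  then show "centred_gaussian_rv M (\<lambda>\<omega>. W \<omega> s) (K_lim s s)" .
  have Hp: "centred_gaussian_rv M (\<lambda>\<omega>. W \<omega> s + W \<omega> t) (K_lim s s + K_lim t t + 2 * K_lim s t)"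
  proof -
    have X: "centred_gaussian_rv M (\<lambda>\<omega>. \<Sum>i<(2::nat). (\<lambda>i. 1::real) i * W \<omega> ((\<lambda>i. if i = 0 then s else t) i))
       (\<Sum>i<(2::nat). \<Sum>j<(2::nat). (\<lambda>i. 1::real) i * (\<lambda>i. 1::real) j * K_lim ((\<lambda>i. if i = 0 then s else t) i) ((\<lambda>i. if i = 0 then s else t) j))"
      by (rule H)
    have e1: "(\<lambda>\<omega>. \<Sum>i<(2::nat). (\<lambda>i. 1::real) i * W \<omega> ((\<lambda>i. if i = 0 then s else t) i)) = (\<lambda>\<omega>. W \<omega> s + W \<omega> t)"
      by (simp add: eval_nat_numeral)
    have e2: "(\<Sum>i<(2::nat). \<Sum>j<(2::nat). (\<lambda>i. 1::real) i * (\<lambda>i. 1::real) j * K_lim ((\<lambda>i. if i = 0 then s else t) i) ((\<lambda>i. if i = 0 then s else t) j))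
       = K_lim s s + K_lim t t + 2 * K_lim s t"
      by (simp add: eval_nat_numeral K_sym[of t s])
    show ?thesis using X unfolding e1 e2 .
  qed
  have Hm: "centred_gaussian_rv M (\<lambda>\<omega>. W \<omega> s - W \<omega> t) (K_lim s s + K_lim t t - 2 * K_lim s t)"
  proof -
    have X: "centred_gaussian_rv M (\<lambda>\<omega>. \<Sum>i<(2::nat). (\<lambda>i. if i = 0 then 1 else -1::real) i * W \<omega> ((\<lambda>i. if i = 0 then s else t) i))
       (\<Sum>i<(2::nat). \<Sum>j<(2::nat). (\<lambda>i. if i = 0 then 1 else -1::real) i * (\<lambda>i. if i = 0 then 1 else -1::real) j * K_lim ((\<lambda>i. if i = 0 then s else t) i) ((\<lambda>i. if i = 0 then s else t) j))"
      by (rule H)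
    have e1: "(\<lambda>\<omega>. \<Sum>i<(2::nat). (\<lambda>i. if i = 0 then 1 else -1::real) i * W \<omega> ((\<lambda>i. if i = 0 then s else t) i)) = (\<lambda>\<omega>. W \<omega> s - W \<omega> t)"
      by (simp add: eval_nat_numeral)
    have e2: "(\<Sum>i<(2::nat). \<Sum>j<(2::nat). (\<lambda>i. if i = 0 then 1 else -1::real) i * (\<lambda>i. if i = 0 then 1 else -1::real) j * K_lim ((\<lambda>i. if i = 0 then s else t) i) ((\<lambda>i. if i = 0 then s else t) j))
       = K_lim s s + K_lim t t - 2 * K_lim s t"
      by (simp add: eval_nat_numeral K_sym[of t s])
    show ?thesis using X unfolding e1 e2 .
  qed
  show "integrable M (\<lambda>\<omega>. (W \<omega> s)\<^sup>2 * (W \<omega> t)\<^sup>2) \<and>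
         (\<integral>\<omega>. (W \<omega> s)\<^sup>2 * (W \<omega> t)\<^sup>2 \<partial>M) = K_lim s s * K_lim t t + 2 * (K_lim s t)\<^sup>2"
    by (rule cg_cross[OF P one one Hp Hm])
qed


theorem mainTheorem6:
  fixes M :: "'a measure" and W :: "'a \<Rightarrow> real \<Rightarrow> real" and \<gamma> :: real
  assumes "prob_space M"
    and "\<gamma> > 2"
    and "(\<lambda>(\<omega>, t). W \<omega> t) \<in> borel_measurable (M \<Otimes>\<^sub>M lborel)"
    and "\<forall>\<omega>\<in>space M. integrable lborel (\<lambda>t. (W \<omega> t)\<^sup>2 * w_gamma \<gamma> t)"
    and "centred_gaussian_process M K_lim W"
  shows "let T = (\<lambda>\<omega>. \<integral>t. (W \<omega> t)\<^sup>2 * w_gamma \<gamma> t \<partial>lborel);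
             \<beta> = \<gamma> - 1;
             \<delta> = 1 / sqrt (\<beta>\<^sup>2 - 1);
             \<eta> = 1 / sqrt (4 * \<beta>\<^sup>2 - 1)
         in (\<integral>\<omega>. (T \<omega> - (\<integral>\<omega>'. T \<omega>' \<partial>M))\<^sup>2 \<partial>M)
            = 2 * pi * (1 / \<beta> + 1 / \<beta> ^ 3 + \<delta> + \<delta> ^ 3 + (1/4) * (\<beta>\<^sup>2 + 2) * \<delta> ^ 5
                        - 4 * \<eta> - 12 * \<eta> ^ 3 - 16 * (2 * \<beta>\<^sup>2 + 1) * \<eta> ^ 5)"
proof -
  interpret prob_space M by fact
  interpret PS: pair_sigma_finite M lborel by unfold_locales
  have g: "\<gamma> > 2" by fact
  have Wm: "(\<lambda>x. W (fst x) (snd x)) \<in> borel_measurable (M \<Otimes>\<^sub>M lborel)"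
    using assms(3) by (simp add: case_prod_beta')
  have Wmb[measurable]: "(\<lambda>x. W (fst x) (snd x)) \<in> borel_measurable (M \<Otimes>\<^sub>M borel)"
    using Wm by (subst measurable_cong_sets[OF sets_pair_measure_cong[OF refl sets_lborel[symmetric]] refl])
  have Wc[measurable (raw)]: "(\<lambda>x. W (f x) (g x)) \<in> borel_measurable N"
    if "f \<in> N \<rightarrow>\<^sub>M M" "g \<in> N \<rightarrow>\<^sub>M borel" for f g and N :: "'b measure"
  proof -
    have g': "g \<in> N \<rightarrow>\<^sub>M lborel" using that(2) by (simp add: measurable_lborel2)
    show ?thesis using measurable_compose[OF measurable_Pair[OF that(1) g'] Wm] by simp
  qed
  define h where "h \<omega> t = (W \<omega> t)\<^sup>2 * w_gamma \<gamma> t" for \<omega> t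
  define T where "T \<omega> = (\<integral>t. h \<omega> t \<partial>lborel)" for \<omega>
  define m where "m = mval \<gamma>"
  have wm[measurable]: "w_gamma \<gamma> \<in> borel_measurable borel"
    unfolding w_gamma_def[abs_def] by measurable
  have wm'[measurable]: "w_gamma \<gamma> \<in> borel_measurable lborel"
    unfolding w_gamma_def[abs_def] by measurable
  have w2: "(\<lambda>x. w_gamma \<gamma> (snd x)) \<in> borel_measurable (M \<Otimes>\<^sub>M lborel)"
    by (rule measurable_compose[OF measurable_snd wm'])
  have hm[measurable]: "(\<lambda>(\<omega>, t). h \<omega> t) \<in> borel_measurable (M \<Otimes>\<^sub>M lborel)"
    unfolding h_def case_prod_beta' using Wm w2 by (intro borel_measurable_times borel_measurable_power)
  have Tm[measurable]: "T \<in> borel_measurable M"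
    unfolding T_def by (rule lborel.borel_measurable_lebesgue_integral[OF hm])
  have hnn: "0 \<le> h \<omega> t" for \<omega> t unfolding h_def w_gamma_def by simp
  have hint: "integrable lborel (h \<omega>)" if "\<omega> \<in> space M" for \<omega>
    using assms(4) that unfolding h_def by auto
  have Tnn: "0 \<le> T \<omega>" for \<omega> unfolding T_def by (simp add: hnn)
  have eT: "ennreal (T \<omega>) = (\<integral>\<^sup>+t. ennreal (h \<omega> t) \<partial>lborel)" if "\<omega> \<in> space M" for \<omega>
    unfolding T_def using nn_integral_eq_integral[OF hint[OF that]] hnn by simp
  have F1: "centred_gaussian_rv M (\<lambda>\<omega>. W \<omega> s) (K_lim s s)" for s
    by (rule proc_facts(1)[OF assms(1) assms(5)])
  have F2: "integrable M (\<lambda>\<omega>. (W \<omega> s)\<^sup>2 * (W \<omega> t)\<^sup>2) \<and>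
         (\<integral>\<omega>. (W \<omega> s)\<^sup>2 * (W \<omega> t)\<^sup>2 \<partial>M) = K_lim s s * K_lim t t + 2 * (K_lim s t)\<^sup>2" for s t
    by (rule proc_facts(2)[OF assms(1) assms(5)])
  have Kpos: "0 \<le> K_lim s s" for s using cg_moments[OF assms(1) F1[of s]] by simp
  have wpos: "0 \<le> w_gamma \<gamma> s" for s unfolding w_gamma_def by simp
  have kwpos: "0 \<le> kwf \<gamma> s" for s unfolding kwf_def using Kpos wpos by simp

  have m1: "(\<integral>\<^sup>+\<omega>. ennreal (h \<omega> t) \<partial>M) = ennreal (kwf \<gamma> t)" for t
  proof -
    have i: "integrable M (\<lambda>\<omega>. (W \<omega> t)\<^sup>2)" and e: "(\<integral>\<omega>. (W \<omega> t)\<^sup>2 \<partial>M) = K_lim t t"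
      using cg_moments[OF assms(1) F1[of t]] by auto
    have "has_bochner_integral M (\<lambda>\<omega>. h \<omega> t) (kwf \<gamma> t)"
      unfolding h_def kwf_def
      using has_bochner_integral_mult_left[OF has_bochner_integral_integrable[OF i], of "w_gamma \<gamma> t"] e by simp
    from hbi_nn[OF this hnn] show ?thesis by simp
  qed
  have ET_nn: "(\<integral>\<^sup>+\<omega>. ennreal (T \<omega>) \<partial>M) = ennreal m"
  proof -
    have "(\<integral>\<^sup>+\<omega>. ennreal (T \<omega>) \<partial>M) = (\<integral>\<^sup>+\<omega>. (\<integral>\<^sup>+t. ennreal (h \<omega> t) \<partial>lborel) \<partial>M)"
      by (rule nn_integral_cong) (simp add: eT)
    also have "\<dots> = (\<integral>\<^sup>+t. (\<integral>\<^sup>+\<omega>. ennreal (h \<omega> t) \<partial>M) \<partial>lborel)"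
      by (rule PS.Fubini'[symmetric]) measurable
    also have "\<dots> = (\<integral>\<^sup>+t. ennreal (kwf \<gamma> t) \<partial>lborel)" by (simp add: m1)
    also have "\<dots> = ennreal m" unfolding m_def using hbi_nn[OF kw_int[OF g] kwpos] by simp
    finally show ?thesis .
  qed
  have m_nn: "0 \<le> m" unfolding m_def using hbi_nn[OF kw_int[OF g] kwpos] by simp
  have TI: "integrable M T \<and> integral\<^sup>L M T = m"
    using nn_integral_eq_integrable[of T M m] ET_nn Tnn m_nn by simp

  define gg where "gg s t = (K_lim s s * K_lim t t + 2 * (K_lim s t)\<^sup>2) * w_gamma \<gamma> s * w_gamma \<gamma> t" for s t
  have ggpos: "0 \<le> gg s t" for s t unfolding gg_def using Kpos wpos by simp
  have m2: "(\<integral>\<^sup>+\<omega>. ennreal (h \<omega> s * h \<omega> t) \<partial>M) = ennreal (gg s t)" for s t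
  proof -
    have "has_bochner_integral M (\<lambda>\<omega>. ((W \<omega> s)\<^sup>2 * (W \<omega> t)\<^sup>2) * (w_gamma \<gamma> s * w_gamma \<gamma> t)) (gg s t)"
      unfolding gg_def
      using has_bochner_integral_mult_left[OF has_bochner_integral_integrable[OF conjunct1[OF F2[of s t]]], of "w_gamma \<gamma> s * w_gamma \<gamma> t"]
        conjunct2[OF F2[of s t]] by (simp add: mult.assoc)
    moreover have "(\<lambda>\<omega>. ((W \<omega> s)\<^sup>2 * (W \<omega> t)\<^sup>2) * (w_gamma \<gamma> s * w_gamma \<gamma> t)) = (\<lambda>\<omega>. h \<omega> s * h \<omega> t)"
      unfolding h_def by (simp add: algebra_simps)
    ultimately have "has_bochner_integral M (\<lambda>\<omega>. h \<omega> s * h \<omega> t) (gg s t)" by simp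
    from hbi_nn[OF this] hnn show ?thesis by (simp add: mult_nonneg_nonneg)
  qed
  have Gpos: "0 \<le> Gf \<gamma> s" for s
    using hbi_nn[OF inner_int[OF g, of s]] ggpos unfolding gg_def by simp
  have eT2: "ennreal ((T \<omega>)\<^sup>2) = (\<integral>\<^sup>+s. (\<integral>\<^sup>+t. ennreal (h \<omega> s * h \<omega> t) \<partial>lborel) \<partial>lborel)"
    if \<omega>: "\<omega> \<in> space M" for \<omega>
  proof -
    have hm1[measurable]: "h \<omega> \<in> borel_measurable lborel"
      using measurable_Pair2[OF hm \<omega>] by simp
    have "ennreal ((T \<omega>)\<^sup>2) = ennreal (T \<omega>) * ennreal (T \<omega>)"
      using Tnn by (simp add: power2_eq_square ennreal_mult)
    also have "\<dots> = (\<integral>\<^sup>+s. ennreal (h \<omega> s) \<partial>lborel) * ennreal (T \<omega>)" using eT[OF \<omega>] by simp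
    also have "\<dots> = (\<integral>\<^sup>+s. ennreal (h \<omega> s) * ennreal (T \<omega>) \<partial>lborel)"
      by (rule nn_integral_multc[symmetric]) measurable
    also have "\<dots> = (\<integral>\<^sup>+s. (\<integral>\<^sup>+t. ennreal (h \<omega> s) * ennreal (h \<omega> t) \<partial>lborel) \<partial>lborel)"
      by (rule nn_integral_cong) (simp add: eT[OF \<omega>] nn_integral_cmult)
    also have "\<dots> = (\<integral>\<^sup>+s. (\<integral>\<^sup>+t. ennreal (h \<omega> s * h \<omega> t) \<partial>lborel) \<partial>lborel)"
      using hnn by (simp add: ennreal_mult)
    finally show ?thesis .
  qed
  have ET2_nn: "(\<integral>\<^sup>+\<omega>. ennreal ((T \<omega>)\<^sup>2) \<partial>M) = ennreal (m * m + 2 * Ival \<gamma>)"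
  proof -
    have "(\<integral>\<^sup>+\<omega>. ennreal ((T \<omega>)\<^sup>2) \<partial>M) = (\<integral>\<^sup>+\<omega>. (\<integral>\<^sup>+s. (\<integral>\<^sup>+t. ennreal (h \<omega> s * h \<omega> t) \<partial>lborel) \<partial>lborel) \<partial>M)"
      by (rule nn_integral_cong) (simp add: eT2)
    also have "\<dots> = (\<integral>\<^sup>+s. (\<integral>\<^sup>+\<omega>. (\<integral>\<^sup>+t. ennreal (h \<omega> s * h \<omega> t) \<partial>lborel) \<partial>M) \<partial>lborel)"
      by (rule PS.Fubini'[symmetric]) measurable
    also have "\<dots> = (\<integral>\<^sup>+s. (\<integral>\<^sup>+t. (\<integral>\<^sup>+\<omega>. ennreal (h \<omega> s * h \<omega> t) \<partial>M) \<partial>lborel) \<partial>lborel)"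
      by (rule nn_integral_cong, rule PS.Fubini'[symmetric]) measurable
    also have "\<dots> = (\<integral>\<^sup>+s. (\<integral>\<^sup>+t. ennreal (gg s t) \<partial>lborel) \<partial>lborel)" by (simp add: m2)
    also have "\<dots> = (\<integral>\<^sup>+s. ennreal (Gf \<gamma> s) \<partial>lborel)"
      using hbi_nn[OF inner_int[OF g]] ggpos unfolding gg_def by simp
    also have "\<dots> = ennreal (m * m + 2 * Ival \<gamma>)"
      unfolding m_def using hbi_nn[OF outer_int[OF g] Gpos] by simp
    finally show ?thesis .
  qed
  have mI_nn: "0 \<le> m * m + 2 * Ival \<gamma>" unfolding m_def using hbi_nn[OF outer_int[OF g] Gpos] by simp
  have T2I: "integrable M (\<lambda>\<omega>. (T \<omega>)\<^sup>2) \<and> (\<integral>\<omega>. (T \<omega>)\<^sup>2 \<partial>M) = m * m + 2 * Ival \<gamma>"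
    using nn_integral_eq_integrable[of "\<lambda>\<omega>. (T \<omega>)\<^sup>2" M "m * m + 2 * Ival \<gamma>"] ET2_nn mI_nn by simp

  have var: "(\<integral>\<omega>. (T \<omega> - (\<integral>\<omega>'. T \<omega>' \<partial>M))\<^sup>2 \<partial>M) = 2 * Ival \<gamma>"
  proof -
    have "(\<lambda>\<omega>. (T \<omega> - (\<integral>\<omega>'. T \<omega>' \<partial>M))\<^sup>2) = (\<lambda>\<omega>. (T \<omega>)\<^sup>2 - 2 * m * T \<omega> + m * m)"
      using TI by (simp add: power2_diff power2_eq_square algebra_simps)
    moreover have "(\<integral>\<omega>. (T \<omega>)\<^sup>2 - 2 * m * T \<omega> + m * m \<partial>M) = (m * m + 2 * Ival \<gamma>) - 2 * m * m + m * m"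
    proof -
      have i1: "integrable M (\<lambda>\<omega>. (T \<omega>)\<^sup>2)" using T2I by simp
      have i2: "integrable M (\<lambda>\<omega>. 2 * m * T \<omega>)" using TI by simp
      have i3: "integrable M (\<lambda>\<omega>. m * m)" by simp
      have "(\<integral>\<omega>. (T \<omega>)\<^sup>2 - 2 * m * T \<omega> + m * m \<partial>M)
          = (\<integral>\<omega>. (T \<omega>)\<^sup>2 \<partial>M) - (\<integral>\<omega>. 2 * m * T \<omega> \<partial>M) + (\<integral>\<omega>. m * m \<partial>M)"
        using Bochner_Integration.integral_add[OF Bochner_Integration.integrable_diff[OF i1 i2] i3] Bochner_Integration.integral_diff[OF i1 i2] by simp
      also have "\<dots> = (m * m + 2 * Ival \<gamma>) - 2 * m * m + m * m"
        using TI T2I prob_space by simp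
      finally show ?thesis .
    qed
    ultimately show ?thesis by simp
  qed
  note V = var[unfolded T_def h_def]
  note F = Ival_formula[OF g, unfolded Let_def]
  show ?thesis unfolding Let_def V F by (rule refl)
qed

end
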